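(* Let $n\ge 3$ and let $V$ be an optimal acyclic matching on $\Delta^n$. Let $\rho(V)$ be the set of pairs $(\sigma,\tau)\in V$ with $\dim\tau\le n-2$ (i.e. the pairs of $V$ lying in the $(n-2)$-skeleton $\Delta^n_{(n-2)}$). Then $\rho(V)$ is an optimal acyclic matching on $\Delta^n_{(n-2)}$ with exactly one critical vertex and exactly $n$ critical $(n-2)$-dimensional simplices (and no other critical simplices).
   Context: All simplicial complexes are finite abstract simplicial complexes; simplices are nonempty. $\Delta^n$ is the simplicial complex of all nonempty subsets of an $(n+1)$-element vertex set; $\Delta^n_{(k)}$ denotes its $k$-skeleton. The Hasse diagram $\mathcal{H}(K)$ of $K$ is the directed graph whose vertices are the simplices of $K$, with an edge $\sigma\to\tau$ whenever $\sigma\subsetneq\tau$ and $\dim\tau=\dim\sigma+1$. A matching on $\mathcal{H}(K)$ is a set $W$ of edges of $\mathcal{H}(K)$, no two sharing a vertex; an edge $\sigma\to\tau$ in $W$ is called a pair $(\sigma,\tau)$, and a simplex lying in no pair is called critical. $W$ is acyclic if the directed graph obtained from $\mathcal{H}(K)$ by reversing every edge in $W$ has no directed cycle. An acyclic matching is optimal if it minimizes the total number of critical simplices among all acyclic matchings on $K$. *)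

theory Defs
  imports Main
begin

text \<open>Finite abstract simplicial complexes: a complex is a set of simplices,
each simplex a finite nonempty set of vertices.\<close>

definition simplex_dim :: "'a set \<Rightarrow> nat" where
  "simplex_dim s = card s - 1"

definition Delta :: "nat \<Rightarrow> nat set set" where
  "Delta n = {s. s \<subseteq> {0..n} \<and> s \<noteq> {}}"

definition skeleton :: "'a set set \<Rightarrow> nat \<Rightarrow> 'a set set" where
  "skeleton K k = {s \<in> K. simplex_dim s \<le> k}"

definition hasse_edges :: "'a set set \<Rightarrow> ('a set \<times> 'a set) set" where
  "hasse_edges K = {(s, t). s \<in> K \<and> t \<in> K \<and> s \<subset> t \<and> simplex_dim t = simplex_dim s + 1}"

definition is_matching :: "'a set set \<Rightarrow> ('a set \<times> 'a set) set \<Rightarrow> bool" where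
  "is_matching K W \<longleftrightarrow> W \<subseteq> hasse_edges K \<and>
     (\<forall>e\<in>W. \<forall>f\<in>W. e \<noteq> f \<longrightarrow> {fst e, snd e} \<inter> {fst f, snd f} = {})"

definition modified_hasse :: "'a set set \<Rightarrow> ('a set \<times> 'a set) set \<Rightarrow> ('a set \<times> 'a set) set" where
  "modified_hasse K W = (hasse_edges K - W) \<union> W\<inverse>"

definition acyclic_matching :: "'a set set \<Rightarrow> ('a set \<times> 'a set) set \<Rightarrow> bool" where
  "acyclic_matching K W \<longleftrightarrow> is_matching K W \<and> acyclic (modified_hasse K W)"

definition critical :: "'a set set \<Rightarrow> ('a set \<times> 'a set) set \<Rightarrow> 'a set set" where
  "critical K W = {s \<in> K. \<forall>e\<in>W. s \<noteq> fst e \<and> s \<noteq> snd e}"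

definition optimal_acyclic_matching :: "'a set set \<Rightarrow> ('a set \<times> 'a set) set \<Rightarrow> bool" where
  "optimal_acyclic_matching K W \<longleftrightarrow> acyclic_matching K W \<and>
     (\<forall>W'. acyclic_matching K W' \<longrightarrow> card (critical K W) \<le> card (critical K W'))"

end

theory Submission
  imports Defs
begin

lemma matching_unique:
  assumes "is_matching K W" "e \<in> W" "f \<in> W" "x = fst e \<or> x = snd e" "x = fst f \<or> x = snd f"
  shows "e = f"
  using assms unfolding is_matching_def by blast

lemma matching_hasse:
  "is_matching K W \<Longrightarrow> e \<in> W \<Longrightarrow> fst e \<in> K \<and> snd e \<in> K \<and> fst e \<subset> snd e
     \<and> simplex_dim (snd e) = simplex_dim (fst e) + 1"
proof -
  assume "is_matching K W" "e \<in> W"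
  then have "e \<in> hasse_edges K" unfolding is_matching_def by blast
  then show ?thesis unfolding hasse_edges_def by (cases e) auto
qed

lemma euler:
  assumes fin: "finite K" and m: "is_matching K W"
  shows "(\<Sum>s\<in>K. (-1::int)^simplex_dim s) = (\<Sum>s\<in>critical K W. (-1::int)^simplex_dim s)"
proof -
  let ?f = "\<lambda>s. (-1::int)^simplex_dim s"
  have WK: "W \<subseteq> K \<times> K" using matching_hasse[OF m] by fastforce
  have finW: "finite W" using WK fin finite_subset by blast
  have inj1: "inj_on fst W" by (rule inj_onI) (metis matching_unique[OF m])
  have inj2: "inj_on snd W" by (rule inj_onI) (metis matching_unique[OF m])
  have disj: "fst ` W \<inter> snd ` W = {}"
  proof (rule ccontr)
    assume "fst ` W \<inter> snd ` W \<noteq> {}"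
    then obtain e f where ef: "e \<in> W" "f \<in> W" "fst e = snd f" by force
    then have "e = f" using matching_unique[OF m, of e f "fst e"] by auto
    moreover have "fst e \<subset> snd e" using matching_hasse[OF m ef(1)] by blast
    ultimately show False using ef by simp
  qed
  have Kdec: "K = critical K W \<union> (fst ` W \<union> snd ` W)" unfolding critical_def using WK by force
  have cd: "critical K W \<inter> (fst ` W \<union> snd ` W) = {}" unfolding critical_def by force
  have "sum ?f K = sum ?f (critical K W) + sum ?f (fst ` W \<union> snd ` W)"
    using Kdec cd fin by (metis finite_Un sum.union_disjoint)
  moreover have "sum ?f (fst ` W \<union> snd ` W) = sum ?f (fst`W) + sum ?f (snd`W)"
    by (simp add: sum.union_disjoint finW disj)
  moreover have "sum ?f (fst`W) = (\<Sum>e\<in>W. ?f (fst e))" using sum.reindex[OF inj1] by simp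
  moreover have "sum ?f (snd`W) = (\<Sum>e\<in>W. ?f (snd e))" using sum.reindex[OF inj2] by simp
  moreover have "(\<Sum>e\<in>W. ?f (snd e)) = (\<Sum>e\<in>W. - ?f (fst e))"
    by (rule sum.cong) (auto simp: matching_hasse[OF m])
  moreover have "(\<Sum>e\<in>W. - ?f (fst e)) = - (\<Sum>e\<in>W. ?f (fst e))" by (rule sum_negf)
  ultimately show ?thesis by linarith
qed

lemma crit_vertex:
  assumes fin: "finite K" and el: "\<And>s. s \<in> K \<Longrightarrow> finite s \<and> s \<noteq> {}"
    and cl: "\<And>s x. s \<in> K \<Longrightarrow> x \<in> s \<Longrightarrow> {x} \<in> K"
    and ne: "K \<noteq> {}" and am: "acyclic_matching K W"
  shows "\<exists>v. {v} \<in> critical K W"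
proof (rule ccontr)
  assume nc: "\<not> ?thesis"
  have m: "is_matching K W" using am[unfolded acyclic_matching_def] by (rule conjunct1)
  have ac: "acyclic (modified_hasse K W)" using am[unfolded acyclic_matching_def] by (rule conjunct2)
  let ?r = "modified_hasse K W"
  have h1: "hasse_edges K \<subseteq> K \<times> K" unfolding hasse_edges_def by blast
  have h2: "W \<subseteq> K \<times> K"
  proof
    fix p assume "p \<in> W" then show "p \<in> K \<times> K" using matching_hasse[OF m, of p] by (cases p) auto
  qed
  have "?r \<subseteq> K \<times> K" unfolding modified_hasse_def using h1 h2 by blast
  then have "finite ?r" using finite_subset[OF _ finite_cartesian_product[OF fin fin]] by blast
  then have wf: "wf (?r\<^sup>+)" using finite_acyclic_wf ac wf_trancl by blast
  obtain s0 where "s0 \<in> K" using ne by blast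
  then obtain x0 where "x0 \<in> s0" using el by blast
  let ?Q = "{{v} | v. {v} \<in> K}"
  have "{x0} \<in> ?Q" using \<open>s0 \<in> K\<close> \<open>x0 \<in> s0\<close> cl by blast
  then obtain z where zQ: "z \<in> ?Q" and zmin: "\<And>y. (y, z) \<in> ?r\<^sup>+ \<Longrightarrow> y \<notin> ?Q"
    using wf_eq_minimal[THEN iffD1, OF wf, rule_format, of "{x0}" ?Q] by blast
  obtain v where zv: "z = {v}" "{v} \<in> K" using zQ by blast
  then have "{v} \<notin> critical K W" using nc by blast
  then obtain e where e: "e \<in> W" "{v} = fst e \<or> {v} = snd e" using zv unfolding critical_def by blast
  have eh: "fst e \<in> K \<and> snd e \<in> K \<and> fst e \<subset> snd e \<and> simplex_dim (snd e) = simplex_dim (fst e) + 1"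
    using matching_hasse[OF m e(1)] .
  have "{v} \<noteq> snd e"
  proof
    assume "{v} = snd e"
    then have "fst e \<subset> {v}" using eh by simp
    then have "fst e = {}" by blast
    then show False using el eh by blast
  qed
  then have fe: "fst e = {v}" using e by blast
  define t where "t = snd e"
  have "simplex_dim t = 1" using eh fe t_def by (simp add: simplex_dim_def)
  moreover have "card t > 0" using el eh t_def by (simp add: card_gt_0_iff)
  ultimately have ct: "card t = 2" unfolding simplex_dim_def by simp
  have "v \<in> t" using eh fe t_def by blast
  have "finite t" using ct card.infinite by fastforce
  then have "card (t - {v}) = 1" using ct \<open>v \<in> t\<close> by simp
  then obtain w where "t - {v} = {w}" using card_1_singletonE by blast
  then have w: "t = {v,w}" "w \<noteq> v" using \<open>v \<in> t\<close> by auto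
  have tK: "t \<in> K" using eh t_def by blast
  have wK: "{w} \<in> K" by (rule cl[OF tK]) (simp add: w(1))
  have sub: "{w} \<subset> t" using w by auto
  have d0: "simplex_dim {w} = 0" by (simp add: simplex_dim_def)
  have h: "({w}, t) \<in> hasse_edges K" unfolding hasse_edges_def
    using wK tK sub d0 \<open>simplex_dim t = 1\<close> by simp
  have "({w}, t) \<notin> W"
  proof
    assume wt: "({w}, t) \<in> W"
    have "({w}, t) = e" by (rule matching_unique[OF m wt e(1), of t]) (simp_all add: t_def)
    then have "{w} = {v}" using fe by (metis fst_conv)
    then show False using w(2) by simp
  qed
  then have r1: "({w}, t) \<in> ?r" using h unfolding modified_hasse_def by blast
  have "e = ({v}, t)" using fe t_def by (metis prod.collapse)
  then have "(t, {v}) \<in> W\<inverse>" using e(1) by simp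
  then have "(t, {v}) \<in> ?r" unfolding modified_hasse_def by (rule UnI2)
  then have "({w}, {v}) \<in> ?r\<^sup>+" using r1 by (meson trancl.simps)
  moreover have "{w} \<in> ?Q" using wK by blast
  ultimately show False using zmin zv(1) by blast
qed

definition cone :: "nat \<Rightarrow> (nat set \<times> nat set) set" where
  "cone n = {(s, insert 0 s) | s. s \<subseteq> {1..n} \<and> s \<noteq> {}}"

lemma Delta_el: "s \<in> Delta n \<Longrightarrow> finite s \<and> s \<noteq> {} \<and> s \<subseteq> {0..n}"
  unfolding Delta_def using finite_subset by blast

lemma cone_am: "acyclic_matching (Delta n) (cone n)"
proof -
  have hs: "cone n \<subseteq> hasse_edges (Delta n)"
  proof
    fix p assume "p \<in> cone n"
    then obtain s where p: "p = (s, insert 0 s)" "s \<subseteq> {1..n}" "s \<noteq> {}" unfolding cone_def by blast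
    have fs: "finite s" using p(2) finite_subset by blast
    have "0 \<notin> s" using p(2) by auto
    then have c: "card (insert 0 s) = card s + 1" using fs by simp
    have "card s > 0" using fs p(3) by (simp add: card_gt_0_iff)
    then have "simplex_dim (insert 0 s) = simplex_dim s + 1" using c by (simp add: simplex_dim_def)
    moreover have "s \<in> Delta n" "insert 0 s \<in> Delta n" using p(2,3) by (auto simp: Delta_def)
    moreover have "s \<subset> insert 0 s" using \<open>0 \<notin> s\<close> by blast
    ultimately show "p \<in> hasse_edges (Delta n)" unfolding hasse_edges_def using p(1) by simp
  qed
  have dj: "\<forall>e\<in>cone n. \<forall>f\<in>cone n. e \<noteq> f \<longrightarrow> {fst e, snd e} \<inter> {fst f, snd f} = {}"
  proof (intro ballI impI)
    fix e f assume "e \<in> cone n" "f \<in> cone n" "e \<noteq> f"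
    then obtain s s' where e: "e = (s, insert 0 s)" "s \<subseteq> {1..n}"
      and f: "f = (s', insert 0 s')" "s' \<subseteq> {1..n}" unfolding cone_def by blast
    have "0 \<notin> s" "0 \<notin> s'" using e(2) f(2) by auto
    have "s \<noteq> s'" using e f \<open>e \<noteq> f\<close> by blast
    moreover have "insert 0 s \<noteq> insert 0 s'"
    proof
      assume "insert 0 s = insert 0 s'"
      then have "insert 0 s - {0} = insert 0 s' - {0}" by simp
      then show False using \<open>s \<noteq> s'\<close> \<open>0 \<notin> s\<close> \<open>0 \<notin> s'\<close> by simp
    qed
    moreover have "s \<noteq> insert 0 s'" "insert 0 s \<noteq> s'" using \<open>0 \<notin> s\<close> \<open>0 \<notin> s'\<close> by auto
    ultimately show "{fst e, snd e} \<inter> {fst f, snd f} = {}" using e(1) f(1) by auto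
  qed
  define \<phi> where "\<phi> = (\<lambda>x::nat set. card x + (if 0 \<in> x then 0 else 2))"
  have sub: "modified_hasse (Delta n) (cone n) \<subseteq> inv_image less_than \<phi>"
  proof
    fix p assume "p \<in> modified_hasse (Delta n) (cone n)"
    then consider "p \<in> hasse_edges (Delta n)" "p \<notin> cone n" | "p \<in> (cone n)\<inverse>"
      unfolding modified_hasse_def by blast
    then show "p \<in> inv_image less_than \<phi>"
    proof cases
      case 1
      obtain a b where p: "p = (a, b)" by (cases p)
      have a: "finite a" "a \<noteq> {}" "a \<subseteq> {0..n}" and b: "finite b" "b \<noteq> {}" "b \<subseteq> {0..n}"
        and ab: "a \<subset> b" "simplex_dim b = simplex_dim a + 1"
        using 1(1) p Delta_el unfolding hasse_edges_def by auto
      have "card a > 0" "card b > 0" using a b by (auto simp: card_gt_0_iff)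
      then have cb: "card b = card a + 1" using ab(2) by (simp add: simplex_dim_def)
      show ?thesis
      proof (cases "0 \<in> a")
        case True then have "0 \<in> b" using ab by blast
        then show ?thesis using True cb p by (simp add: \<phi>_def)
      next
        case False
        show ?thesis
        proof (cases "0 \<in> b")
          case True
          have "a \<subseteq> b - {0}" using ab False by blast
          moreover have "card (b - {0}) = card a" using True cb b(1) by simp
          ultimately have "a = b - {0}" using b(1) by (metis card_subset_eq finite_Diff)
          then have "b = insert 0 a" using True by blast
          moreover have "a \<subseteq> {1..n}" using a(3) False
            by (auto simp: subset_eq) (metis Suc_leI gr0I)
          ultimately have "p \<in> cone n" using p a(2) unfolding cone_def by blast
          then show ?thesis using 1(2) by blast
        next
          case False2: False
          then show ?thesis using False cb p by (simp add: \<phi>_def)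
        qed
      qed
    next
      case 2
      then obtain s where p: "p = (insert 0 s, s)" "s \<subseteq> {1..n}" unfolding cone_def by blast
      have fs: "finite s" using p(2) finite_subset by blast
      have "0 \<notin> s" using p(2) by auto
      then show ?thesis using p fs by (simp add: \<phi>_def)
    qed
  qed
  have "acyclic (inv_image less_than \<phi>)" by (rule wf_acyclic) simp
  then have "acyclic (modified_hasse (Delta n) (cone n))" using sub acyclic_subset by blast
  then show ?thesis unfolding acyclic_matching_def is_matching_def using hs dj by blast
qed

lemma cone_crit: "critical (Delta n) (cone n) = {{0}}"
proof -
  have "{0} \<in> critical (Delta n) (cone n)"
  proof -
    have "{0} \<in> Delta n" unfolding Delta_def by simp
    moreover have "{0} \<noteq> fst e \<and> {0} \<noteq> snd e" if e_in: "e \<in> cone n" for e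
    proof -
      obtain s where e: "e = (s, insert 0 s)" "s \<subseteq> {1..n}" "s \<noteq> {}"
        using e_in unfolding cone_def by blast
      have "0 \<notin> s" using e(2) by auto
      then show ?thesis using e by auto
    qed
    ultimately show ?thesis unfolding critical_def by blast
  qed
  moreover have "s \<notin> critical (Delta n) (cone n)" if "s \<in> Delta n" "s \<noteq> {0}" for s
  proof (cases "0 \<in> s")
    case True
    have "s - {0} \<noteq> {}" using True that(2) by blast
    moreover have "s - {0} \<subseteq> {1..n}" using Delta_el[OF that(1)]
      by (auto simp: subset_eq)
    ultimately have "(s - {0}, insert 0 (s - {0})) \<in> cone n" unfolding cone_def by blast
    moreover have "insert 0 (s - {0}) = s" using True by blast
    ultimately have c: "(s - {0}, s) \<in> cone n" by simp
    show ?thesis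
    proof
      assume "s \<in> critical (Delta n) (cone n)"
      then have "\<forall>e\<in>cone n. s \<noteq> snd e" unfolding critical_def by blast
      then have "s \<noteq> snd (s - {0}, s)" using c by blast
      then show False by simp
    qed
  next
    case False
    have "s \<subseteq> {1..n}" using Delta_el[OF that(1)] False
      by (auto simp: subset_eq) (metis Suc_leI gr0I)
    then have "(s, insert 0 s) \<in> cone n" unfolding cone_def using Delta_el[OF that(1)] by blast
    then have c: "(s, insert 0 s) \<in> cone n" .
    show ?thesis
    proof
      assume "s \<in> critical (Delta n) (cone n)"
      then have "\<forall>e\<in>cone n. s \<noteq> fst e" unfolding critical_def by blast
      then have "s \<noteq> fst (s, insert 0 s)" using c by blast
      then show False by simp
    qed
  qed
  moreover have "critical (Delta n) (cone n) \<subseteq> Delta n" unfolding critical_def by blast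
  ultimately show ?thesis by blast
qed

lemma count_bound:
  fixes C :: "'a set" and d :: "'a \<Rightarrow> nat"
  assumes fC: "finite C" and xC: "x \<in> C" and dx: "d x = 0"
    and S: "(\<Sum>s\<in>C. (-1::int)^d s) = 1 + (-1)^k * int m"
  shows "m + 1 \<le> card C"
proof -
  have "(\<Sum>s\<in>C. (-1::int)^d s) = (-1)^d x + (\<Sum>s\<in>C-{x}. (-1::int)^d s)"
    using sum.remove[OF fC xC] .
  then have eq: "(\<Sum>s\<in>C-{x}. (-1::int)^d s) = (-1)^k * int m" using S dx by simp
  have "\<bar>\<Sum>s\<in>C-{x}. (-1::int)^d s\<bar> \<le> (\<Sum>s\<in>C-{x}. \<bar>(-1::int)^d s\<bar>)" by (rule sum_abs)
  also have "\<dots> = (\<Sum>s\<in>C-{x}. (1::int))" by (rule sum.cong) (simp_all add: power_abs)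
  also have "\<dots> = int (card (C - {x}))" by simp
  finally have le: "\<bar>(-1::int)^k * int m\<bar> \<le> int (card (C-{x}))" unfolding eq .
  have "\<bar>(-1::int)^k * int m\<bar> = int m" by (simp add: abs_mult power_abs)
  then have "m \<le> card (C-{x})" using le by linarith
  moreover have "card (C-{x}) = card C - 1" using fC xC by simp
  moreover have "card C > 0" using fC xC card_gt_0_iff by blast
  ultimately show ?thesis by linarith
qed

lemma inj_fst_match:
  assumes m: "is_matching K W" shows "inj_on fst W"
proof (rule inj_onI)
  fix x y assume "x \<in> W" "y \<in> W" "fst x = fst y"
  then show "x = y" using matching_unique[OF m, of x y "fst x"] by simp
qed

lemma inj_snd_match:
  assumes m: "is_matching K W" shows "inj_on snd W"
proof (rule inj_onI)
  fix x y assume "x \<in> W" "y \<in> W" "snd x = snd y"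
  then show "x = y" using matching_unique[OF m, of x y "snd x"] by simp
qed

lemma dim_Delta: "s \<in> Delta n \<Longrightarrow> simplex_dim s = card s - 1 \<and> card s \<ge> 1"
  using Delta_el[of s n] by (simp add: simplex_dim_def card_gt_0_iff Suc_le_eq)

theorem mainTheorem4:
  fixes n :: nat and V :: "(nat set \<times> nat set) set"
  assumes "n \<ge> 3"
    and "optimal_acyclic_matching (Delta n) V"
  shows "let \<rho> = {(s, t) \<in> V. simplex_dim t \<le> n - 2};
             K = skeleton (Delta n) (n - 2);
             C = critical K \<rho>
         in optimal_acyclic_matching K \<rho>
          \<and> card {s \<in> C. simplex_dim s = 0} = 1
          \<and> card {s \<in> C. simplex_dim s = n - 2} = n
          \<and> (\<forall>s\<in>C. simplex_dim s = 0 \<or> simplex_dim s = n - 2)"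
proof -
  have n3: "n \<ge> 3" using assms(1) .
  have amV: "acyclic_matching (Delta n) V"
    using assms(2)[unfolded optimal_acyclic_matching_def] by (rule conjunct1)
  have mV: "is_matching (Delta n) V" using amV[unfolded acyclic_matching_def] by (rule conjunct1)
  have acV: "acyclic (modified_hasse (Delta n) V)"
    using amV[unfolded acyclic_matching_def] by (rule conjunct2)
  have finD: "finite (Delta n)"
  proof (rule finite_subset)
    show "Delta n \<subseteq> Pow {0..n}" unfolding Delta_def by blast
  qed simp
  have elD: "\<And>s. s \<in> Delta n \<Longrightarrow> finite s \<and> s \<noteq> {}" using Delta_el by blast
  have clD: "\<And>s x. s \<in> Delta n \<Longrightarrow> x \<in> s \<Longrightarrow> {x} \<in> Delta n" unfolding Delta_def by blast
  have z: "{0} \<in> Delta n" unfolding Delta_def by simp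
  then have neD: "Delta n \<noteq> {}" by blast
  obtain v0 where v0: "{v0} \<in> critical (Delta n) V"
  proof -
    have "\<exists>v. {v} \<in> critical (Delta n) V"
      by (rule crit_vertex[OF finD _ _ neD amV]) (use elD clD in blast)+
    then show ?thesis using that by blast
  qed
  have "card (critical (Delta n) V) \<le> card (critical (Delta n) (cone n))"
    using assms(2) cone_am unfolding optimal_acyclic_matching_def by blast
  then have c1: "card (critical (Delta n) V) \<le> 1" by (simp add: cone_crit)
  have fcV: "finite (critical (Delta n) V)" using finD unfolding critical_def by simp
  have critV: "critical (Delta n) V = {{v0}}"
  proof -
    have "card (critical (Delta n) V) \<noteq> 0" using v0 fcV by (metis card_0_eq empty_iff)
    then have "card (critical (Delta n) V) = 1" using c1 by linarith
    then obtain x where "critical (Delta n) V = {x}" by (rule card_1_singletonE)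
    then show ?thesis using v0 by simp
  qed
  have dimv: "simplex_dim {v0} = 0" by (simp add: simplex_dim_def)
  have notcrit: "\<exists>e\<in>V. s = fst e \<or> s = snd e" if "s \<in> Delta n" "s \<noteq> {v0}" for s
  proof -
    have "s \<notin> critical (Delta n) V" using critV that by simp
    then show ?thesis unfolding critical_def using that by blast
  qed
  define T where "T = {0..n}"
  have TD: "T \<in> Delta n" unfolding T_def Delta_def by auto
  have cT: "card T = n + 1" by (simp add: T_def)
  have "T \<noteq> {v0}" using cT n3 by auto
  then obtain e where e: "e \<in> V" "T = fst e \<or> T = snd e" using notcrit[OF TD] by blast
  have eh: "fst e \<in> Delta n \<and> snd e \<in> Delta n \<and> fst e \<subset> snd e
     \<and> simplex_dim (snd e) = simplex_dim (fst e) + 1" using matching_hasse[OF mV e(1)] .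
  have "T \<noteq> fst e"
  proof
    assume "T = fst e"
    moreover have "snd e \<subseteq> T" using eh Delta_el[of "snd e" n] T_def by blast
    ultimately show False using eh by blast
  qed
  then have "T = snd e" using e(2) by blast
  define f where "f = fst e"
  have fT: "(f, T) \<in> V" using e(1) \<open>T = snd e\<close> f_def by simp
  have dimT: "simplex_dim T = n" using cT by (simp add: simplex_dim_def)
  have fD: "f \<in> Delta n" and dimf: "simplex_dim f = n - 1"
    using eh f_def \<open>T = snd e\<close> dimT by auto
  have dimiff: "simplex_dim g = n - 1 \<longleftrightarrow> card g = n" if "g \<in> Delta n" for g
    using dim_Delta[OF that] n3 by auto
  define F where "F = {g \<in> Delta n. simplex_dim g = n - 1}"
  have F_eq: "F = {g. g \<subseteq> {0..n} \<and> card g = n}"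
  proof
    show "F \<subseteq> {g. g \<subseteq> {0..n} \<and> card g = n}"
      using dimiff Delta_el unfolding F_def by blast
  next
    show "{g. g \<subseteq> {0..n} \<and> card g = n} \<subseteq> F"
    proof
      fix g assume g: "g \<in> {g. g \<subseteq> {0..n} \<and> card g = n}"
      then have "g \<noteq> {}" using n3 by auto
      then have gD: "g \<in> Delta n" using g unfolding Delta_def by blast
      then show "g \<in> F" using dimiff[OF gD] g unfolding F_def by blast
    qed
  qed
  have cardF: "card F = n + 1" using n_subsets[of "{0..n}" n] F_eq by simp
  have fF: "f \<in> F" using fD dimf unfolding F_def by blast
  define P where "P = {e\<in>V. simplex_dim (snd e) = n - 1}"
  define S where "S = fst ` P"
  have sndP: "snd ` P = F - {f}"
  proof
    show "snd ` P \<subseteq> F - {f}"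
    proof
      fix g assume "g \<in> snd ` P"
      then obtain e' where e': "e' \<in> V" "simplex_dim (snd e') = n - 1" "g = snd e'"
        unfolding P_def by blast
      have "snd e' \<in> Delta n" using matching_hasse[OF mV e'(1)] by blast
      moreover have "snd e' \<noteq> f"
      proof
        assume "snd e' = f"
        then have "e' = (f, T)" using matching_unique[OF mV e'(1) fT, of f] by simp
        then show False using e'(2) dimT n3 by simp
      qed
      ultimately show "g \<in> F - {f}" using e' unfolding F_def by blast
    qed
  next
    show "F - {f} \<subseteq> snd ` P"
    proof
      fix g assume g: "g \<in> F - {f}"
      then have gD: "g \<in> Delta n" and dg: "simplex_dim g = n - 1" unfolding F_def by auto
      have "g \<noteq> {v0}" using dg dimv n3 by auto
      then obtain e' where e': "e' \<in> V" "g = fst e' \<or> g = snd e'" using notcrit[OF gD] by blast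
      have eh': "fst e' \<in> Delta n \<and> snd e' \<in> Delta n \<and> fst e' \<subset> snd e'
        \<and> simplex_dim (snd e') = simplex_dim (fst e') + 1" using matching_hasse[OF mV e'(1)] .
      have "g \<noteq> fst e'"
      proof
        assume gf: "g = fst e'"
        then have "simplex_dim (snd e') = n" using eh' dg n3 by simp
        then have "card (snd e') = n + 1" using dim_Delta[of "snd e'" n] eh' by simp
        moreover have "snd e' \<subseteq> {0..n}" using eh' Delta_el by blast
        ultimately have "snd e' = T" unfolding T_def by (simp add: card_subset_eq)
        then have "e' = (f, T)" using matching_unique[OF mV e'(1) fT, of T] by simp
        then show False using gf g by simp
      qed
      then have "g = snd e'" using e'(2) by blast
      then show "g \<in> snd ` P" using e' dg unfolding P_def by blast
    qed
  qed
  have PV: "P \<subseteq> V" unfolding P_def by blast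
  have cardS: "card S = n"
  proof -
    have "card S = card P" unfolding S_def
      using card_image inj_on_subset[OF inj_fst_match[OF mV] PV] by blast
    also have "\<dots> = card (snd ` P)"
      using card_image inj_on_subset[OF inj_snd_match[OF mV] PV] by metis
    also have "\<dots> = n" using sndP cardF fF finD by (simp add: F_def)
    finally show ?thesis .
  qed
  have S_prop: "simplex_dim s = n - 2 \<and> s \<in> Delta n \<and> (\<exists>t. (s, t) \<in> V \<and> simplex_dim t = n - 1)"
    if sS: "s \<in> S" for s
  proof -
    obtain e' where e': "e' \<in> V" "simplex_dim (snd e') = n - 1" "s = fst e'"
      using sS unfolding S_def P_def by blast
    have eh': "fst e' \<in> Delta n \<and> snd e' \<in> Delta n \<and> fst e' \<subset> snd e'
        \<and> simplex_dim (snd e') = simplex_dim (fst e') + 1" using matching_hasse[OF mV e'(1)] .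
    then show ?thesis using e' n3 by (metis add_diff_cancel_right' diff_diff_left one_add_one prod.collapse)
  qed
  define \<rho> where "\<rho> = {(s, t) \<in> V. simplex_dim t \<le> n - 2}"
  define K where "K = skeleton (Delta n) (n - 2)"
  have rho_mem: "e' \<in> \<rho> \<longleftrightarrow> e' \<in> V \<and> simplex_dim (snd e') \<le> n - 2" for e'
    by (cases e') (simp add: \<rho>_def)
  have K_mem: "s \<in> K \<longleftrightarrow> s \<in> Delta n \<and> simplex_dim s \<le> n - 2" for s
    unfolding K_def skeleton_def by simp
  have v0K: "{v0} \<in> K" using K_mem v0 dimv unfolding critical_def by simp
  have critK: "critical K \<rho> = insert {v0} S"
  proof
    show "critical K \<rho> \<subseteq> insert {v0} S"
    proof
      fix s assume s: "s \<in> critical K \<rho>"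
      then have sK: "s \<in> K" and nr: "\<forall>e\<in>\<rho>. s \<noteq> fst e \<and> s \<noteq> snd e"
        unfolding critical_def by auto
      show "s \<in> insert {v0} S"
      proof (cases "s = {v0}")
        case True then show ?thesis by simp
      next
        case False
        then obtain e' where e': "e' \<in> V" "s = fst e' \<or> s = snd e'"
          using notcrit sK K_mem by blast
        have eh': "fst e' \<in> Delta n \<and> snd e' \<in> Delta n \<and> fst e' \<subset> snd e'
          \<and> simplex_dim (snd e') = simplex_dim (fst e') + 1" using matching_hasse[OF mV e'(1)] .
        have "e' \<notin> \<rho>" using nr e'(2) by blast
        then have big: "simplex_dim (snd e') > n - 2" using rho_mem e'(1) by simp
        then have "s \<noteq> snd e'" using sK K_mem by auto
        then have "s = fst e'" using e'(2) by blast
        then have "simplex_dim (snd e') = n - 1" using big eh' sK K_mem n3 by auto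
        then have "e' \<in> P" using e'(1) unfolding P_def by blast
        then show ?thesis using \<open>s = fst e'\<close> unfolding S_def by blast
      qed
    qed
  next
    show "insert {v0} S \<subseteq> critical K \<rho>"
    proof
      fix s assume s: "s \<in> insert {v0} S"
      show "s \<in> critical K \<rho>"
      proof (cases "s = {v0}")
        case True
        then show ?thesis using v0 v0K rho_mem unfolding critical_def by auto
      next
        case False
        then have sS: "s \<in> S" using s by blast
        then obtain t where t: "(s, t) \<in> V" "simplex_dim t = n - 1" and ds: "simplex_dim s = n - 2"
          and sD: "s \<in> Delta n" using S_prop by blast
        have sK: "s \<in> K" using K_mem sD ds by simp
        have "s \<noteq> fst e' \<and> s \<noteq> snd e'" if e'r: "e' \<in> \<rho>" for e'
        proof (rule ccontr)
          assume "\<not> (s \<noteq> fst e' \<and> s \<noteq> snd e')"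
          then have "e' = (s, t)" using matching_unique[OF mV _ t(1), of e' s] e'r rho_mem by auto
          then show False using e'r rho_mem t(2) n3 by auto
        qed
        then show ?thesis using sK unfolding critical_def by blast
      qed
    qed
  qed
  have v0S: "{v0} \<notin> S" using S_prop dimv n3 by fastforce
  have finS: "finite S" using cardS n3 card.infinite by fastforce
  have cardC: "card (critical K \<rho>) = n + 1" using critK v0S finS cardS by simp
  have c0: "{s \<in> critical K \<rho>. simplex_dim s = 0} = {{v0}}"
    using critK dimv S_prop n3 by fastforce
  have c2: "{s \<in> critical K \<rho>. simplex_dim s = n - 2} = S"
    using critK dimv S_prop n3 by fastforce
  have call: "\<forall>s\<in>critical K \<rho>. simplex_dim s = 0 \<or> simplex_dim s = n - 2"
    using critK dimv S_prop by auto
  have KD: "K \<subseteq> Delta n" using K_mem by blast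
  have finK: "finite K" using finite_subset[OF KD finD] .
  have elK: "\<And>s. s \<in> K \<Longrightarrow> finite s \<and> s \<noteq> {}" using elD KD by blast
  have clK: "{x} \<in> K" if "s \<in> K" "x \<in> s" for s x
  proof -
    have "{x} \<in> Delta n" using clD K_mem that by blast
    moreover have "simplex_dim {x} \<le> n - 2" by (simp add: simplex_dim_def)
    ultimately show "{x} \<in> K" using K_mem by blast
  qed
  have neK: "K \<noteq> {}" using v0K by blast
  have mR: "is_matching K \<rho>"
    unfolding is_matching_def
  proof
    show "\<rho> \<subseteq> hasse_edges K"
    proof
      fix p assume p: "p \<in> \<rho>"
      then have pV: "p \<in> V" and dp: "simplex_dim (snd p) \<le> n - 2" using rho_mem by auto
      have eh': "fst p \<in> Delta n \<and> snd p \<in> Delta n \<and> fst p \<subset> snd p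
        \<and> simplex_dim (snd p) = simplex_dim (fst p) + 1" using matching_hasse[OF mV pV] .
      then have "fst p \<in> K" "snd p \<in> K" using K_mem dp by auto
      then show "p \<in> hasse_edges K" using eh' unfolding hasse_edges_def by (cases p) auto
    qed
  next
    show "\<forall>e\<in>\<rho>. \<forall>f\<in>\<rho>. e \<noteq> f \<longrightarrow> {fst e, snd e} \<inter> {fst f, snd f} = {}"
      using mV rho_mem unfolding is_matching_def by blast
  qed
  have "modified_hasse K \<rho> \<subseteq> modified_hasse (Delta n) V"
  proof
    fix p assume "p \<in> modified_hasse K \<rho>"
    then consider "p \<in> hasse_edges K" "p \<notin> \<rho>" | "p \<in> \<rho>\<inverse>"
      unfolding modified_hasse_def by blast
    then show "p \<in> modified_hasse (Delta n) V"
    proof cases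
      case 1
      have "p \<in> hasse_edges (Delta n)" using 1(1) KD unfolding hasse_edges_def by auto
      moreover have "p \<notin> V"
      proof
        assume "p \<in> V"
        moreover have "snd p \<in> K" using 1(1) unfolding hasse_edges_def by auto
        ultimately have "p \<in> \<rho>" using rho_mem K_mem by blast
        then show False using 1(2) by blast
      qed
      ultimately show ?thesis unfolding modified_hasse_def by blast
    next
      case 2
      then show ?thesis unfolding modified_hasse_def using rho_mem by auto
    qed
  qed
  then have "acyclic (modified_hasse K \<rho>)" using acV acyclic_subset by blast
  then have amR: "acyclic_matching K \<rho>" using mR unfolding acyclic_matching_def by blast
  have sumR: "(\<Sum>s\<in>critical K \<rho>. (-1::int)^simplex_dim s) = 1 + (-1)^(n-2) * int n"
  proof -
    have "(\<Sum>s\<in>critical K \<rho>. (-1::int)^simplex_dim s)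
        = (-1::int)^simplex_dim {v0} + (\<Sum>s\<in>S. (-1::int)^simplex_dim s)"
      using critK v0S finS by simp
    also have "(\<Sum>s\<in>S. (-1::int)^simplex_dim s) = (\<Sum>s\<in>S. (-1::int)^(n-2))"
      using S_prop by simp
    finally show ?thesis using cardS dimv by simp
  qed
  have optR: "card (critical K \<rho>) \<le> card (critical K W)" if amW: "acyclic_matching K W" for W
  proof -
    have mW: "is_matching K W" using amW[unfolded acyclic_matching_def] by (rule conjunct1)
    have "\<exists>v. {v} \<in> critical K W"
      by (rule crit_vertex[OF finK _ _ neK amW]) (use elK clK in blast)+
    then obtain u where u: "{u} \<in> critical K W" by blast
    have "(\<Sum>s\<in>critical K W. (-1::int)^simplex_dim s) = 1 + (-1)^(n-2) * int n"
      using euler[OF finK mW] euler[OF finK mR] sumR by simp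
    moreover have "finite (critical K W)" using finK unfolding critical_def by simp
    ultimately have "n + 1 \<le> card (critical K W)"
      using count_bound[of "critical K W" "{u}" simplex_dim "n-2" n] u by (simp add: simplex_dim_def)
    then show ?thesis using cardC by simp
  qed
  have oR: "optimal_acyclic_matching K \<rho>"
    unfolding optimal_acyclic_matching_def using amR optR by blast
  have c0': "card {s \<in> critical K \<rho>. simplex_dim s = 0} = 1" unfolding c0 by simp
  have c2': "card {s \<in> critical K \<rho>. simplex_dim s = n - 2} = n" unfolding c2 by (rule cardS)
  have R: "optimal_acyclic_matching K \<rho>
          \<and> card {s \<in> critical K \<rho>. simplex_dim s = 0} = 1
          \<and> card {s \<in> critical K \<rho>. simplex_dim s = n - 2} = n
          \<and> (\<forall>s\<in>critical K \<rho>. simplex_dim s = 0 \<or> simplex_dim s = n - 2)"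
    using oR c0' c2' call by (intro conjI)
  show ?thesis unfolding Let_def using R unfolding \<rho>_def K_def .
qed

end
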